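(* Let $u$ be a smooth, nowhere vanishing solution of the DNLS equation $\mathrm{i}u_t+u_{xx}+2\mathrm{i}(|u|^2u)_x=0$, and let $s_1,\alpha_4\in\mathbb{R}$ be such that $\mathbf{L}=-\frac{\mathrm{i}}{8}\mathbf{V}(\mathbf{Q};\lambda)+\frac{\mathrm{i}s_1}{4}\mathbf{U}(\mathbf{Q};\lambda)+\alpha_4\sigma_3$ satisfies $\mathbf{L}_x=[\mathbf{U},\mathbf{L}]$, $\mathbf{L}_t=[\mathbf{V},\mathbf{L}]$ for all $\lambda$. Then $\det\mathbf{L}$ is independent of $(x,t)$ and has the form $\det\mathbf{L}=P(\lambda)=-\lambda^8+s_1\lambda^6-s_2\lambda^4+s_3\lambda^2-s_4$ for constants $s_2,s_3,s_4\in\mathbb{R}$, and $\nu=|u|^2$, viewed as a function of $\xi=x+2s_1t$, satisfies $$\nu_\xi^2=-R(\nu),$$ where $$R(\nu)=\nu^4+4s_1\nu^3+(6s_1^2-8s_2+48\alpha_4)\nu^2+(4s_1^3-16s_1s_2+64s_3+32s_1\alpha_4)\nu+(-s_1^2+4s_2+8\alpha_4)^2.$$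
   Context: $\sigma_3=\mathrm{diag}(1,-1)$, $\mathbf{Q}=\begin{pmatrix}0&\mathrm{i}u\\ \mathrm{i}u^*&0\end{pmatrix}$, $\mathbf{U}(\mathbf{Q};\lambda)=-2\mathrm{i}\sigma_3\lambda^2+2\mathbf{Q}\lambda$, $\mathbf{V}(\mathbf{Q};\lambda)=(4\lambda^2+2\mathbf{Q}^2)\mathbf{U}(\mathbf{Q};\lambda)+2\mathrm{i}\sigma_3\mathbf{Q}_x\lambda$ (the DNLS Lax pair). *)

theory Defs
  imports "HOL-Analysis.Analysis"
begin

definition px :: "(real \<times> real \<Rightarrow> complex) \<Rightarrow> real \<times> real \<Rightarrow> complex" where
  "px f = (\<lambda>(x, t). vector_derivative (\<lambda>y. f (y, t)) (at x))"

definition pt :: "(real \<times> real \<Rightarrow> complex) \<Rightarrow> real \<times> real \<Rightarrow> complex" where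
  "pt f = (\<lambda>(x, t). vector_derivative (\<lambda>s. f (x, s)) (at t))"

text \<open>Iterated partial derivative; True = d/dx, False = d/dt.\<close>
fun pd :: "bool list \<Rightarrow> (real \<times> real \<Rightarrow> complex) \<Rightarrow> real \<times> real \<Rightarrow> complex" where
  "pd [] f = f"
| "pd (True # ds) f = px (pd ds f)"
| "pd (False # ds) f = pt (pd ds f)"

definition smooth2 :: "(real \<times> real \<Rightarrow> complex) \<Rightarrow> bool" where
  "smooth2 f \<longleftrightarrow> (\<forall>ds. continuous_on UNIV (pd ds f) \<and>
     (\<forall>x t. (\<lambda>y. pd ds f (y, t)) differentiable (at x) \<and>
            (\<lambda>s. pd ds f (x, s)) differentiable (at t)))"

type_synonym cmat = "complex^2^2"

definition mat2 :: "complex \<Rightarrow> complex \<Rightarrow> complex \<Rightarrow> complex \<Rightarrow> cmat" where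
  "mat2 a b c d = (\<chi> i j. if i = 1 then (if j = 1 then a else b) else (if j = 1 then c else d))"

definition msc :: "complex \<Rightarrow> cmat \<Rightarrow> cmat" where
  "msc c A = (\<chi> i j. c * A $ i $ j)"

definition sigma3 :: cmat where
  "sigma3 = mat2 1 0 0 (-1)"

definition Qm :: "complex \<Rightarrow> cmat" where
  "Qm w = mat2 0 (\<i> * w) (\<i> * cnj w) 0"

definition Ulax :: "cmat \<Rightarrow> complex \<Rightarrow> cmat" where
  "Ulax Q lam = msc (-2 * \<i> * lam^2) sigma3 + msc (2 * lam) Q"

definition Vlax :: "cmat \<Rightarrow> cmat \<Rightarrow> complex \<Rightarrow> cmat" where
  "Vlax Q Qx lam = (mat (4 * lam^2) + msc 2 (Q ** Q)) ** Ulax Q lam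
                   + msc (2 * \<i> * lam) (sigma3 ** Qx)"

definition Lmat :: "(real \<Rightarrow> real \<Rightarrow> complex) \<Rightarrow> real \<Rightarrow> real \<Rightarrow> real \<Rightarrow> real \<Rightarrow> complex \<Rightarrow> cmat" where
  "Lmat u s1 a4 x t lam =
     msc (- \<i> / 8) (Vlax (Qm (u x t)) (Qm (vector_derivative (\<lambda>y. u y t) (at x))) lam)
     + msc (\<i> * of_real s1 / 4) (Ulax (Qm (u x t)) lam)
     + msc (of_real a4) sigma3"

definition dnls :: "(real \<Rightarrow> real \<Rightarrow> complex) \<Rightarrow> bool" where
  "dnls u \<longleftrightarrow> (\<forall>x t.
     \<i> * vector_derivative (\<lambda>s. u x s) (at t)
     + vector_derivative (\<lambda>y. vector_derivative (\<lambda>z. u z t) (at y)) (at x)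
     + 2 * \<i> * vector_derivative (\<lambda>y. of_real ((cmod (u y t))^2) * u y t) (at x) = 0)"

definition Rpoly :: "real \<Rightarrow> real \<Rightarrow> real \<Rightarrow> real \<Rightarrow> real \<Rightarrow> real" where
  "Rpoly s1 s2 s3 a4 nu =
     nu^4 + 4* s1* nu^3 + (6* s1^2 - 8* s2 + 48* a4)* nu^2
     + (4* s1^3 - 16* s1* s2 + 64* s3 + 32* s1* a4)* nu + (4 * s2 + 8 * a4 - s1^2)^2"

end

theory Submission
  imports Defs
begin


lemma mat2_nth[simp]: "mat2 a b c d $ 1 $ 1 = a" "mat2 a b c d $ 1 $ 2 = b"
  "mat2 a b c d $ 2 $ 1 = c" "mat2 a b c d $ 2 $ 2 = d"
  by (simp_all add: mat2_def)

lemma msc_nth[simp]: "msc c A $ i $ j = c * A $ i $ j" by (simp add: msc_def)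

lemma mmult2: "((A::cmat) ** B) $ i $ j = A$i$1 * B$1$j + A$i$2 * B$2$j"
  by (simp add: matrix_matrix_mult_def sum_2)

lemma cmat_eq: "(A::cmat) = B \<longleftrightarrow> A$1$1 = B$1$1 \<and> A$1$2 = B$1$2 \<and> A$2$1 = B$2$1 \<and> A$2$2 = B$2$2"
  by (auto simp: vec_eq_iff forall_2)

definition LM :: "complex \<Rightarrow> complex \<Rightarrow> real \<Rightarrow> real \<Rightarrow> complex \<Rightarrow> cmat" where
 "LM w wx s1 a4 lam = mat2 (- (lam^4) + (w*cnj w + of_real s1)/2 * lam^2 + of_real a4)
    (lam*((lam^2 - (w*cnj w + of_real s1)/2)*w + \<i>*wx/4))
    (lam*((lam^2 - (w*cnj w + of_real s1)/2)*cnj w - \<i>*cnj wx/4))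
    (lam^4 - (w*cnj w + of_real s1)/2 * lam^2 - of_real a4)"

lemma Lmat_LM: "Lmat u s1 a4 x t lam = LM (u x t) (vector_derivative (\<lambda>y. u y t) (at x)) s1 a4 lam"
  unfolding Lmat_def LM_def cmat_eq
  by (simp add: Vlax_def Ulax_def Qm_def sigma3_def mmult2 mat_def algebra_simps power2_eq_square power4_eq_xxxx power3_eq_cube)



lemma bl_msc: "bounded_linear (\<lambda>a. msc a E)"
proof -
  have "linear (\<lambda>a. msc a E)"
    apply (rule linearI)
    apply (subst cmat_eq; simp add: ring_distribs)
    apply (subst cmat_eq; simp add: mult_scaleR_right mult_scaleR_left)
    done
  then show ?thesis by (simp add: linear_conv_bounded_linear)
qed

lemma mat2_decomp: "mat2 a b c d = msc a (mat2 1 0 0 0) + msc b (mat2 0 1 0 0) + msc c (mat2 0 0 1 0) + msc d (mat2 0 0 0 1)"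
  by (simp add: cmat_eq)

lemma mat2_vd:
  assumes "(A has_vector_derivative A') F" "(B has_vector_derivative B') F"
    "(C has_vector_derivative C') F" "(D has_vector_derivative D') F"
  shows "((\<lambda>r. mat2 (A r) (B r) (C r) (D r)) has_vector_derivative mat2 A' B' C' D') F"
  unfolding mat2_decomp[of "A _"] mat2_decomp[of A']
  apply (intro has_vector_derivative_add bounded_linear.has_vector_derivative[OF bl_msc] assms)
  done

definition LMd :: "complex \<Rightarrow> complex \<Rightarrow> complex \<Rightarrow> complex \<Rightarrow> real \<Rightarrow> complex \<Rightarrow> cmat" where
 "LMd w w' wx wx' s1 lam = mat2 ((w'*cnj w + w*cnj w')/2 * lam^2)
    (lam*((- (w'*cnj w + w*cnj w')/2)*w + (lam^2 - (w*cnj w + of_real s1)/2)*w' + \<i>*wx'/4))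
    (lam*((- (w'*cnj w + w*cnj w')/2)*cnj w + (lam^2 - (w*cnj w + of_real s1)/2)*cnj w' - \<i>*cnj wx'/4))
    (- (w'*cnj w + w*cnj w')/2 * lam^2)"

lemma LM_vd:
  assumes "(g has_vector_derivative g') (at r)" "(h has_vector_derivative h') (at r)"
  shows "((\<lambda>r. LM (g r) (h r) s1 a4 lam) has_vector_derivative LMd (g r) g' (h r) h' s1 lam) (at r)"
  unfolding LM_def LMd_def
  apply (rule mat2_vd)
  apply (rule has_vector_derivative_eq_rhs, (rule derivative_intros assms)+, simp add: field_simps)+
  done


lemma comm_det0:
  fixes L D U :: cmat
  assumes "D = U ** L - L ** U"
  shows "D$1$1*L$2$2 + L$1$1*D$2$2 - D$1$2*L$2$1 - L$1$2*D$2$1 = 0"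
  unfolding assms by (simp add: mmult2 algebra_simps)

lemma bl_nth: "bounded_linear (\<lambda>A::cmat. A$i$j)"
  by (rule bounded_linear_compose[of "\<lambda>v::complex^2. v$j" "\<lambda>A::cmat. A$i"]) (rule bounded_linear_vec_nth)+

lemma det_vd:
  fixes F :: "real \<Rightarrow> cmat"
  assumes "(F has_vector_derivative F') (at r)"
  shows "((\<lambda>r. det (F r)) has_vector_derivative
     (F'$1$1*F r$2$2 + F r$1$1*F'$2$2 - F'$1$2*F r$2$1 - F r$1$2*F'$2$1)) (at r)"
proof -
  have e: "\<And>i j. ((\<lambda>r. F r $ i $ j) has_vector_derivative F' $ i $ j) (at r)"
    by (rule bounded_linear.has_vector_derivative[OF bl_nth assms])
  show ?thesis
    unfolding det_2
    by (rule has_vector_derivative_eq_rhs, (rule derivative_intros e)+, simp add: algebra_simps)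
qed

definition S2f :: "complex \<Rightarrow> complex \<Rightarrow> real \<Rightarrow> real \<Rightarrow> real" where
  "S2f w wx s1 a4 = (((cmod w)^2 + s1)/2)^2 - 2*a4 - 2*(((cmod w)^2 + s1)/2)*(cmod w)^2 + (- Im (cnj w * wx)/2)"
definition S3f :: "complex \<Rightarrow> complex \<Rightarrow> real \<Rightarrow> real \<Rightarrow> real" where
  "S3f w wx s1 a4 = -2*(((cmod w)^2 + s1)/2)*a4 - (cmod w)^2*(((cmod w)^2 + s1)/2)^2
      + (- Im (cnj w * wx)/2)*(((cmod w)^2 + s1)/2) - (cmod wx)^2/16"

lemma det_LM_gen:
  "det (LM w wx s1 a4 lam) = - (((lam^2)^2 - ((w*cnj w + of_real s1)/2) * lam^2 - of_real a4)^2)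
     - lam^2 * ((lam^2 - (w*cnj w + of_real s1)/2)^2 * (w*cnj w)
        + (lam^2 - (w*cnj w + of_real s1)/2) * (\<i>*(cnj w * wx - w * cnj wx)/4) + wx*cnj wx/16)"
proof -
  define c where "c = (w*cnj w + of_real s1)/2"
  have "det (LM w wx s1 a4 lam) = (- (lam^4) + c * lam^2 + of_real a4) * (lam^4 - c * lam^2 - of_real a4)
      - (lam*((lam^2 - c)*w + \<i>*wx/4)) * (lam*((lam^2 - c)*cnj w - \<i>*cnj wx/4))"
    unfolding det_2 LM_def c_def by simp
  also have "\<dots> = - (((lam^2)^2 - c * lam^2 - of_real a4)^2)
     - lam^2 * ((lam^2 - c)^2 * (w*cnj w)
        + (lam^2 - c) * (\<i>*(cnj w * wx - w * cnj wx)/4) + wx*cnj wx/16)"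
    by (simp add: field_simps power2_eq_square power4_eq_xxxx)
  finally show ?thesis unfolding c_def .
qed

lemma absid:
  fixes lam :: complex and n m k s1 a4 :: real
  shows "- (((lam^2)^2 - ((of_real n + of_real s1)/2) * lam^2 - of_real a4)^2)
     - lam^2 * ((lam^2 - (of_real n + of_real s1)/2)^2 * (of_real n)
        + (lam^2 - (of_real n + of_real s1)/2) * of_real m + of_real k/16)
   = - (lam^8) + of_real s1 * lam^6 - of_real (((n + s1)/2)^2 - 2*a4 - 2*((n + s1)/2)*n + m) * lam^4
      + of_real (-2*((n + s1)/2)*a4 - n*((n + s1)/2)^2 + m*((n + s1)/2) - k/16) * lam^2 - of_real (a4^2)"
proof -
  define N where "N = (of_real n :: complex)"
  define M where "M = (of_real m :: complex)"
  define K where "K = (of_real k :: complex)"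
  define S where "S = (of_real s1 :: complex)"
  define A where "A = (of_real a4 :: complex)"
  show ?thesis
    unfolding of_real_add of_real_mult of_real_diff of_real_divide of_real_power of_real_minus of_real_numeral
      N_def[symmetric] M_def[symmetric] K_def[symmetric] S_def[symmetric] A_def[symmetric]
    by (simp add: field_simps) algebra
qed

lemma det_LM:
  "det (LM w wx s1 a4 lam) = - (lam^8) + of_real s1 * lam^6 - of_real (S2f w wx s1 a4) * lam^4
      + of_real (S3f w wx s1 a4) * lam^2 - of_real (a4^2)"
proof -
  have h1: "w * cnj w = of_real ((cmod w)^2)" by (simp add: complex_mult_cnj cmod_power2)
  have h2: "wx * cnj wx = of_real ((cmod wx)^2)" by (simp add: complex_mult_cnj cmod_power2)
  have h3: "\<i>*(cnj w * wx - w * cnj wx)/4 = of_real (- Im (cnj w * wx)/2)"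
    by (simp add: complex_eq_iff field_simps)
  show ?thesis
    unfolding det_LM_gen h1 h2 h3 S2f_def S3f_def by (rule absid)
qed
lemma Vlax_eq: "Vlax (Qm w) (Qm wx) lam = mat2 ((4*lam^2 - 2*(w*cnj w))*(-2*\<i>*lam^2))
   ((4*lam^2 - 2*(w*cnj w))*(2*\<i>*lam*w) - 2*lam*wx)
   ((4*lam^2 - 2*(w*cnj w))*(2*\<i>*lam*cnj w) + 2*lam*cnj wx)
   (-(4*lam^2 - 2*(w*cnj w))*(-2*\<i>*lam^2))"
  unfolding cmat_eq
  by (simp add: Vlax_def Ulax_def Qm_def sigma3_def mmult2 mat_def algebra_simps)

lemma V_comm11:
  "(Vlax (Qm w) (Qm wx) lam ** LM w wx s1 a4 lam - LM w wx s1 a4 lam ** Vlax (Qm w) (Qm wx) lam) $ 1 $ 1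
    = lam^2 * of_real s1 * (wx * cnj w + w * cnj wx)"
proof -
  have "(Vlax (Qm w) (Qm wx) lam ** LM w wx s1 a4 lam - LM w wx s1 a4 lam ** Vlax (Qm w) (Qm wx) lam) $ 1 $ 1
    = ((4*lam^2 - 2*(w*cnj w))*(2*\<i>*lam*w) - 2*lam*wx) * (lam*((lam^2 - (w*cnj w + of_real s1)/2)*cnj w - \<i>*cnj wx/4))
     - (lam*((lam^2 - (w*cnj w + of_real s1)/2)*w + \<i>*wx/4)) * ((4*lam^2 - 2*(w*cnj w))*(2*\<i>*lam*cnj w) + 2*lam*cnj wx)"
    unfolding Vlax_eq LM_def by (simp add: mmult2)
  also have "\<dots> = lam^2 * of_real s1 * (wx * cnj w + w * cnj wx)"
    by (simp add: field_simps power2_eq_square)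
  finally show ?thesis .
qed

lemma ode_abs:
  fixes n q K s1 a4 :: real
  shows "4*(n*K - q^2) = - Rpoly s1 (((n+s1)/2)^2 - 2*a4 - 2*((n+s1)/2)*n + (-q/2))
     (-2*((n+s1)/2)*a4 - n*((n+s1)/2)^2 + (-q/2)*((n+s1)/2) - K/16) a4 n"
  unfolding Rpoly_def by (simp add: algebra_simps power2_eq_square power3_eq_cube power4_eq_xxxx divide_simps)

lemma coeff_eq:
  fixes A B A' B' s c :: real
  assumes "\<forall>lam::complex. - (lam^8) + of_real s * lam^6 - of_real A * lam^4 + of_real B * lam^2 - of_real c
     = - (lam^8) + of_real s * lam^6 - of_real A' * lam^4 + of_real B' * lam^2 - of_real c"
  shows "A = A' \<and> B = B'"
proof -
  have "- (1^8) + of_real s * 1^6 - of_real A * 1^4 + of_real B * 1^2 - of_real c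
     = - (1^8) + of_real s * 1^6 - of_real A' * 1^4 + of_real B' * 1^2 - (of_real c :: complex)"
    using assms by blast
  then have "of_real (B - A) = (of_real (B' - A') :: complex)" by (simp add: algebra_simps)
  then have 1: "B - A = B' - A'" by (simp only: of_real_eq_iff)
  have "- (2^8) + of_real s * 2^6 - of_real A * 2^4 + of_real B * 2^2 - of_real c
     = - (2^8) + of_real s * 2^6 - of_real A' * 2^4 + of_real B' * 2^2 - (of_real c :: complex)"
    using assms by blast
  then have "of_real (4*B - 16*A) = (of_real (4*B' - 16*A') :: complex)" by (simp add: algebra_simps)
  then have 2: "4*B - 16*A = 4*B' - 16*A'" by (simp only: of_real_eq_iff)
  from 1 2 show ?thesis by linarith
qed

lemma ode_alg: "(Re (wx * cnj w + w * cnj wx))^2 = - Rpoly s1 (S2f w wx s1 a4) (S3f w wx s1 a4) a4 ((cmod w)^2)"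
proof -
  define p where "p = cnj w * wx"
  have e1: "Re (wx * cnj w + w * cnj wx) = 2 * Re p" unfolding p_def by (simp add: algebra_simps)
  have "cmod p = cmod w * cmod wx" by (simp add: p_def norm_mult)
  moreover have "(Re p)^2 + (Im p)^2 = (cmod p)^2" by (simp add: cmod_power2)
  ultimately have "(Re p)^2 + (Im p)^2 = (cmod w)^2 * (cmod wx)^2" by (simp add: power_mult_distrib)
  then have e2: "(2 * Re p)^2 = 4 * ((cmod w)^2 * (cmod wx)^2 - (Im p)^2)" by (simp add: power_mult_distrib)
  show ?thesis
    unfolding e1 e2 S2f_def S3f_def p_def[symmetric]
    by (rule ode_abs)
qed


lemma cmod2_deriv:
  assumes "(g has_vector_derivative g') (at r)"
  shows "((\<lambda>r. (cmod (g r))^2) has_real_derivative Re (g' * cnj (g r) + g r * cnj g')) (at r)"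
proof -
  have e: "\<And>z. (cmod z)^2 = Re (z * cnj z)" by (simp add: complex_mult_cnj cmod_power2)
  have "((\<lambda>r. g r * cnj (g r)) has_vector_derivative (g r * cnj g' + g' * cnj (g r))) (at r)"
    by (intro has_vector_derivative_mult has_vector_derivative_cnj assms)
  then have "((\<lambda>r. Re (g r * cnj (g r))) has_vector_derivative Re (g r * cnj g' + g' * cnj (g r))) (at r)"
    by (rule bounded_linear.has_vector_derivative[OF bounded_linear_Re])
  then show ?thesis unfolding e has_real_derivative_iff_has_vector_derivative by (simp add: add.commute)
qed

theorem mainTheorem5:
  fixes u :: "real \<Rightarrow> real \<Rightarrow> complex" and s1 a4 :: real
  assumes smooth: "smooth2 (\<lambda>(x, t). u x t)"
    and nonvanishing: "\<forall>x t. u x t \<noteq> 0"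
    and dnls: "dnls u"
    and lax_x: "\<forall>lam x t. vector_derivative (\<lambda>y. Lmat u s1 a4 y t lam) (at x)
        = Ulax (Qm (u x t)) lam ** Lmat u s1 a4 x t lam
          - Lmat u s1 a4 x t lam ** Ulax (Qm (u x t)) lam"
    and lax_t: "\<forall>lam x t. vector_derivative (\<lambda>s. Lmat u s1 a4 x s lam) (at t)
        = Vlax (Qm (u x t)) (Qm (vector_derivative (\<lambda>y. u y t) (at x))) lam ** Lmat u s1 a4 x t lam
          - Lmat u s1 a4 x t lam ** Vlax (Qm (u x t)) (Qm (vector_derivative (\<lambda>y. u y t) (at x))) lam"
  shows "\<exists>s2 s3 s4 :: real.
     (\<forall>x t lam. det (Lmat u s1 a4 x t lam)
        = - (lam^8) + of_real s1 * lam^6 - of_real s2 * lam^4 + of_real s3 * lam^2 - of_real s4)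
   \<and> (\<exists>f :: real \<Rightarrow> real.
        (\<forall>x t. (cmod (u x t))^2 = f (x + 2 * s1 * t))
      \<and> (\<forall>\<xi>. f differentiable (at \<xi>) \<and> (deriv f \<xi>)^2 = - Rpoly s1 s2 s3 a4 (f \<xi>)))"
proof -
  define f0 where "f0 = (\<lambda>(x::real, t::real). u x t)"
  define ux where "ux = (\<lambda>x t. vector_derivative (\<lambda>y. u y t) (at x))"
  define ut where "ut = (\<lambda>x t. vector_derivative (\<lambda>s. u x s) (at t))"
  have sm: "\<And>ds. continuous_on UNIV (pd ds f0) \<and> (\<forall>x t. (\<lambda>y. pd ds f0 (y, t)) differentiable (at x) \<and> (\<lambda>s. pd ds f0 (x, s)) differentiable (at t))"
    using smooth unfolding smooth2_def f0_def by blast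
  have pd0: "pd [] f0 = (\<lambda>(x,t). u x t)" by (simp add: f0_def)
  have pd1: "pd [True] f0 = (\<lambda>(x,t). ux x t)" by (simp add: px_def f0_def ux_def)
  have pdF: "pd [False] f0 = (\<lambda>(x,t). ut x t)" by (simp add: pt_def f0_def ut_def)
  have du_x: "((\<lambda>y. u y t) has_vector_derivative ux x t) (at x)" for x t
    using sm[of "[]"] unfolding pd0 by (auto simp: ux_def vector_derivative_works)
  have du_t: "((\<lambda>s. u x s) has_vector_derivative ut x t) (at t)" for x t
    using sm[of "[]"] unfolding pd0 by (auto simp: ut_def vector_derivative_works)
  have dux_x: "((\<lambda>y. ux y t) has_vector_derivative vector_derivative (\<lambda>y. ux y t) (at x)) (at x)" for x t
    using sm[of "[True]"] unfolding pd1 by (auto simp: vector_derivative_works)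
  have dux_t: "((\<lambda>s. ux x s) has_vector_derivative vector_derivative (\<lambda>s. ux x s) (at t)) (at t)" for x t
    using sm[of "[True]"] unfolding pd1 by (auto simp: vector_derivative_works)
  have LMeq: "Lmat u s1 a4 x t lam = LM (u x t) (ux x t) s1 a4 lam" for x t lam
    by (simp add: Lmat_LM ux_def)
  have dx: "((\<lambda>y. det (Lmat u s1 a4 y t lam)) has_vector_derivative 0) (at x)" for x t lam
  proof -
    define D where "D = LMd (u x t) (ux x t) (ux x t) (vector_derivative (\<lambda>y. ux y t) (at x)) s1 lam"
    have HL: "((\<lambda>y. Lmat u s1 a4 y t lam) has_vector_derivative D) (at x)"
      unfolding LMeq D_def by (rule LM_vd[OF du_x dux_x])
    have "D = Ulax (Qm (u x t)) lam ** Lmat u s1 a4 x t lam - Lmat u s1 a4 x t lam ** Ulax (Qm (u x t)) lam"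
      using lax_x vector_derivative_at[OF HL] by metis
    from comm_det0[OF this] show ?thesis using det_vd[OF HL] by simp
  qed
  have dt: "((\<lambda>s. det (Lmat u s1 a4 x s lam)) has_vector_derivative 0) (at t)"
    and rel: "lam = 1 \<Longrightarrow> Re (ut x t * cnj (u x t) + u x t * cnj (ut x t)) = 2 * s1 * Re (ux x t * cnj (u x t) + u x t * cnj (ux x t))" for x t lam
  proof -
    define D where "D = LMd (u x t) (ut x t) (ux x t) (vector_derivative (\<lambda>s. ux x s) (at t)) s1 lam"
    have HL: "((\<lambda>s. Lmat u s1 a4 x s lam) has_vector_derivative D) (at t)"
      unfolding LMeq D_def by (rule LM_vd[OF du_t dux_t])
    have DD: "D = Vlax (Qm (u x t)) (Qm (ux x t)) lam ** Lmat u s1 a4 x t lam - Lmat u s1 a4 x t lam ** Vlax (Qm (u x t)) (Qm (ux x t)) lam"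
      using lax_t vector_derivative_at[OF HL] unfolding ux_def by metis
    from comm_det0[OF this] show "((\<lambda>s. det (Lmat u s1 a4 x s lam)) has_vector_derivative 0) (at t)"
      using det_vd[OF HL] by simp
    assume l1: "lam = 1"
    have "D $ 1 $ 1 = 1^2 * of_real s1 * (ux x t * cnj (u x t) + u x t * cnj (ux x t))"
      unfolding DD LMeq l1 by (rule V_comm11)
    then have "(ut x t * cnj (u x t) + u x t * cnj (ut x t)) / 2 = of_real s1 * (ux x t * cnj (u x t) + u x t * cnj (ux x t))"
      unfolding D_def LMd_def l1 by simp
    then have "Re ((ut x t * cnj (u x t) + u x t * cnj (ut x t)) / 2) = Re (of_real s1 * (ux x t * cnj (u x t) + u x t * cnj (ux x t)))"
      by simp
    then show "Re (ut x t * cnj (u x t) + u x t * cnj (ut x t)) = 2 * s1 * Re (ux x t * cnj (u x t) + u x t * cnj (ux x t))"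
      by simp
  qed
  have cx: "det (Lmat u s1 a4 x t lam) = det (Lmat u s1 a4 0 t lam)" for x t lam
  proof -
    have "\<exists>c. \<forall>y\<in>UNIV. det (Lmat u s1 a4 y t lam) = c"
      by (rule has_derivative_zero_constant[OF convex_UNIV]) (use dx[where t=t and lam=lam] in \<open>simp add: has_vector_derivative_def\<close>)
    then show ?thesis by auto
  qed
  have ct: "det (Lmat u s1 a4 0 t lam) = det (Lmat u s1 a4 0 0 lam)" for t lam
  proof -
    have "\<exists>c. \<forall>y\<in>UNIV. det (Lmat u s1 a4 0 y lam) = c"
      by (rule has_derivative_zero_constant[OF convex_UNIV]) (use dt[where x=0 and lam=lam] in \<open>simp add: has_vector_derivative_def\<close>)
    then show ?thesis by auto
  qed
  define s2 where "s2 = S2f (u 0 0) (ux 0 0) s1 a4"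
  define s3 where "s3 = S3f (u 0 0) (ux 0 0) s1 a4"
  have detall: "det (Lmat u s1 a4 x t lam)
        = - (lam^8) + of_real s1 * lam^6 - of_real s2 * lam^4 + of_real s3 * lam^2 - of_real (a4^2)" for x t lam
  proof -
    have "det (Lmat u s1 a4 x t lam) = det (Lmat u s1 a4 0 0 lam)" using cx ct by metis
    also have "\<dots> = - (lam^8) + of_real s1 * lam^6 - of_real s2 * lam^4 + of_real s3 * lam^2 - of_real (a4^2)"
      by (simp only: LMeq det_LM s2_def s3_def)
    finally show ?thesis .
  qed
  have coef: "S2f (u x t) (ux x t) s1 a4 = s2 \<and> S3f (u x t) (ux x t) s1 a4 = s3" for x t
    by (rule coeff_eq) (use detall[of x t] in \<open>simp add: LMeq det_LM\<close>)
  define Nx where "Nx = (\<lambda>x t. Re (ux x t * cnj (u x t) + u x t * cnj (ux x t)))"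
  define Nt where "Nt = (\<lambda>x t. Re (ut x t * cnj (u x t) + u x t * cnj (ut x t)))"
  have dNx: "((\<lambda>y. (cmod (u y t))^2) has_real_derivative Nx x t) (at x)" for x t
    unfolding Nx_def by (rule cmod2_deriv[OF du_x])
  have dNt: "((\<lambda>s. (cmod (u x s))^2) has_real_derivative Nt x t) (at t)" for x t
    unfolding Nt_def by (rule cmod2_deriv[OF du_t])
  have relN: "Nt x t = 2 * s1 * Nx x t" for x t
    unfolding Nt_def Nx_def by (rule rel[of 1]) simp
  have cu: "continuous_on UNIV (\<lambda>p. u (fst p) (snd p))"
    using sm[of "[]"] unfolding pd0 by (simp add: case_prod_beta)
  have cut: "continuous_on UNIV (\<lambda>p. ut (fst p) (snd p))"
    using sm[of "[False]"] unfolding pdF by (simp add: case_prod_beta)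
  have cNt: "continuous_on UNIV (\<lambda>p. Nt (fst p) (snd p))"
    unfolding Nt_def by (intro continuous_intros cu cut)
  have jd: "((\<lambda>(x, y). (cmod (u x y))^2) has_derivative (\<lambda>(tx, ty). Nx x y * tx + Nt x y * ty)) (at (x, y))" for x y
  proof -
    have "((\<lambda>(x, y). (cmod (u x y))^2) has_derivative (\<lambda>(tx, ty). (*) (Nx x y) tx + blinfun_apply (blinfun_mult_right (Nt x y)) ty)) (at (x, y) within UNIV \<times> UNIV)"
    proof (rule has_derivative_partialsI)
      show "((\<lambda>x. (cmod (u x y))^2) has_derivative (*) (Nx x y)) (at x within UNIV)"
        using dNx[where x=x and t=y] by (simp add: has_field_derivative_def)
      show "((\<lambda>y. (cmod (u x y))^2) has_derivative blinfun_apply (blinfun_mult_right (Nt x y))) (at y within UNIV)"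
        if "x \<in> UNIV" "y \<in> UNIV" for x y
        using dNt[where x=x and t=y] by (simp add: has_field_derivative_def)
      have "isCont (\<lambda>p. Nt (fst p) (snd p)) (x, y)"
        using cNt by (simp add: continuous_on_eq_continuous_at)
      then have "isCont (\<lambda>p. blinfun_mult_right (Nt (fst p) (snd p))) (x, y)"
        by (rule bounded_linear.continuous[OF bounded_linear_blinfun_mult_right])
      then show "continuous (at (x, y) within UNIV \<times> UNIV) (\<lambda>(x, y). blinfun_mult_right (Nt x y))"
        by (simp add: split_def)
    qed auto
    then show ?thesis by simp
  qed
  have const: "(cmod (u (\<xi> - 2* s1 * z) z))^2 = (cmod (u \<xi> 0))^2" for \<xi> z
  proof -
    define \<phi> where "\<phi> = (\<lambda>s. (\<lambda>(x, y). (cmod (u x y))^2) (\<xi> - 2* s1 * s, s))"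
    have "(\<phi> has_derivative (\<lambda>h. 0)) (at r within UNIV)" for r
    proof -
      have p: "((\<lambda>s. (\<xi> - 2* s1 * s, s)) has_derivative (\<lambda>h. (- (2* s1 * h), h))) (at r)"
        by (auto intro!: derivative_eq_intros)
      have "(\<phi> has_derivative (\<lambda>h. (\<lambda>(tx, ty). Nx (\<xi> - 2* s1 * r) r * tx + Nt (\<xi> - 2* s1 * r) r * ty) (- (2* s1 * h), h))) (at r)"
        unfolding \<phi>_def by (rule has_derivative_compose[OF p jd])
      moreover have "(\<lambda>h. (\<lambda>(tx, ty). Nx (\<xi> - 2* s1 * r) r * tx + Nt (\<xi> - 2* s1 * r) r * ty) (- (2* s1 * h), h)) = (\<lambda>h. 0)"
        by (simp add: relN algebra_simps)
      ultimately show ?thesis by simp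
    qed
    then have "\<exists>c. \<forall>s\<in>UNIV. \<phi> s = c" by (rule has_derivative_zero_constant[OF convex_UNIV])
    then have "\<phi> z = \<phi> 0" by auto
    then show ?thesis by (simp add: \<phi>_def)
  qed
  define f where "f = (\<lambda>\<xi>. (cmod (u \<xi> 0))^2)"
  show ?thesis
  proof (intro exI conjI allI)
    show "det (Lmat u s1 a4 x t lam) = - (lam^8) + of_real s1 * lam^6 - of_real s2 * lam^4 + of_real s3 * lam^2 - of_real (a4^2)" for x t lam
      by (rule detall)
    show "(cmod (u x t))^2 = f (x + 2 * s1 * t)" for x t
      using const[of "x + 2 * s1 * t" t] by (simp add: f_def)
    fix \<xi>
    have df: "(f has_real_derivative Nx \<xi> 0) (at \<xi>)" unfolding f_def by (rule dNx)
    then show "f differentiable (at \<xi>)" by (auto simp: differentiable_def has_field_derivative_def)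
    have "(deriv f \<xi>)^2 = (Nx \<xi> 0)^2" using DERIV_imp_deriv[OF df] by simp
    also have "\<dots> = - Rpoly s1 (S2f (u \<xi> 0) (ux \<xi> 0) s1 a4) (S3f (u \<xi> 0) (ux \<xi> 0) s1 a4) a4 ((cmod (u \<xi> 0))^2)"
      unfolding Nx_def by (rule ode_alg)
    also have "\<dots> = - Rpoly s1 s2 s3 a4 (f \<xi>)" using coef[of \<xi> 0] by (simp add: f_def)
    finally show "(deriv f \<xi>)^2 = - Rpoly s1 s2 s3 a4 (f \<xi>)" .
  qed
qed
end
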